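(* If $f:S\to T$ is an injective nested tuple morphism, then $\mathrm{coal}(L_{f^c})=\mathrm{comp}(L_f,\mathrm{size}(T))$.
   Context: Nested tuples (of positive integers): a positive integer or a finite tuple of nested tuples; flattening $X^\flat$ = integer leaves left to right, $\mathrm{len}$, $\mathrm{entry}_i$, $\mathrm{size}$ = product of entries. $\langle n\rangle_*=\{*,1,\dots,n\}$. A layout $L=S:D$ has congruent nested tuples $S$ (positive) and $D$ (nonnegative), $L^\flat=S^\flat:D^\flat$. Flat layout operations on $L=(s_1,\dots,s_m):(d_1,\dots,d_m)$: $\mathrm{squeeze}(L)$ removes modes with $s_i=1$; $\mathrm{sort}(L)$ stably reorders modes so that they are nondecreasing for the order $s:d\preceq s':d'$ iff $d<d'$ or ($d=d'$ and $s\le s'$); $\mathrm{coal}^\flat(L)$ is obtained from $\mathrm{squeeze}(L)$ by repeatedly merging adjacent modes $s_i,s_{i+1}:d_i,d_{i+1}$ with $d_{i+1}=s_id_i$ into $s_is_{i+1}:d_i$. For a layout $L$ with $\mathrm{coal}^\flat(L^\flat)=(s_1,\dots,s_k):(d_1,\dots,d_k)$, $\mathrm{coal}(L)$ is this flat layout if $k>1$, $s_1:d_1$ (depth $0$) if $k=1$, and $1:0$ if $k=0$. For a positive integer $N$, a flat layout $A$ with $\mathrm{sort}(\mathrm{squeeze}(A))=(s_1,\dots,s_m):(d_1,\dots,d_m)$ is $N$-complementable if $s_id_i\mid d_{i+1}$ for $1\le i<m$ and $s_md_m\mid N$; then $\mathrm{comp}^\flat(A,N)=\mathrm{coal}^\flat(C)$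 where $C=\bigl(d_1,\tfrac{d_2}{s_1d_1},\dots,\tfrac{d_m}{s_{m-1}d_{m-1}},\tfrac{N}{s_md_m}\bigr):(1,s_1d_1,\dots,s_{m-1}d_{m-1},s_md_m)$. For a layout $A$ (with $A^\flat$ $N$-complementable), $\mathrm{comp}(A,N)=\mathrm{coal}(\mathrm{comp}^\flat(A^\flat,N))$. A nested tuple morphism $f:S\to T$ is given by a pointed map $\alpha:\langle\mathrm{len}(S)\rangle_*\to\langle\mathrm{len}(T)\rangle_*$ with each $j\ne*$ having at most one preimage and $\mathrm{entry}_i(S)=\mathrm{entry}_{\alpha(i)}(T)$ when $\alpha(i)\ne*$. It is injective if $\alpha$ is injective (so $\alpha(i)\ne*$ for all $i$). With $T^\flat=(t_1,\dots,t_n)$, $L_f$ has shape $S$ and stride congruent to $S$ with $i$-th flattened entry $0$ if $\alpha(i)=*$, else $\prod_{j<\alpha(i)}t_j$. For injective $f$, let $j_1<\dots<j_k$ be the elements of $\{1,\dots,n\}$ not in the image of $\alpha$; the complement $f^c:(t_{j_1},\dots,t_{j_k})\to T$ is the nested tuple morphism lying over $r\mapsto j_r$. *)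

theory Defs
  imports Main
begin

datatype 'a ntree = Leaf 'a | Tup "'a ntree list"

primrec nt_flat :: "'a ntree \<Rightarrow> 'a list" where
  "nt_flat (Leaf a) = [a]"
| "nt_flat (Tup xs) = concat (map nt_flat xs)"

definition is_ntuple :: "nat ntree \<Rightarrow> bool" where
  "is_ntuple S \<longleftrightarrow> (\<forall>x\<in>set_ntree S. 0 < x)"

definition nt_len :: "'a ntree \<Rightarrow> nat" where
  "nt_len S = length (nt_flat S)"

text \<open>1-based entries of the flattening.\<close>
definition nt_entry :: "'a ntree \<Rightarrow> nat \<Rightarrow> 'a" where
  "nt_entry S i = nt_flat S ! (i - 1)"

definition nt_size :: "nat ntree \<Rightarrow> nat" where
  "nt_size S = prod_list (nt_flat S)"

definition congruent :: "'a ntree \<Rightarrow> 'b ntree \<Rightarrow> bool" where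
  "congruent S D \<longleftrightarrow> map_ntree (\<lambda>_. ()) S = map_ntree (\<lambda>_. ()) D"

type_synonym layout = "nat ntree \<times> nat ntree"
type_synonym flat_layout = "(nat \<times> nat) list"  \<comment> \<open>list of modes s:d\<close>

definition is_layout :: "layout \<Rightarrow> bool" where
  "is_layout L \<longleftrightarrow> is_ntuple (fst L) \<and> congruent (fst L) (snd L)"

definition layout_flat :: "layout \<Rightarrow> flat_layout" where
  "layout_flat L = zip (nt_flat (fst L)) (nt_flat (snd L))"

definition flat_to_layout :: "flat_layout \<Rightarrow> layout" where
  "flat_to_layout A = (Tup (map (Leaf \<circ> fst) A), Tup (map (Leaf \<circ> snd) A))"

definition squeeze :: "flat_layout \<Rightarrow> flat_layout" where
  "squeeze A = filter (\<lambda>(s, d). s \<noteq> 1) A"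

text \<open>Stable sort w.r.t. s:d \<preceq> s':d' iff d < d' or (d = d' and s \<le> s'), implemented as a stable sort by s followed by a stable sort by d.\<close>
definition lsort :: "flat_layout \<Rightarrow> flat_layout" where
  "lsort A = sort_key snd (sort_key fst A)"

fun merge_modes :: "flat_layout \<Rightarrow> flat_layout" where
  "merge_modes [] = []"
| "merge_modes [x] = [x]"
| "merge_modes ((s1, d1) # (s2, d2) # rest) =
     (if d2 = s1 * d1 then merge_modes ((s1 * s2, d1) # rest)
      else (s1, d1) # merge_modes ((s2, d2) # rest))"

definition coal_flat :: "flat_layout \<Rightarrow> flat_layout" where
  "coal_flat A = merge_modes (squeeze A)"

definition coal :: "layout \<Rightarrow> layout" where
  "coal L = (let C = coal_flat (layout_flat L) in
     if length C > 1 then flat_to_layout C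
     else if length C = 1 then (Leaf (fst (hd C)), Leaf (snd (hd C)))
     else (Leaf 1, Leaf 0))"

definition complementable :: "flat_layout \<Rightarrow> nat \<Rightarrow> bool" where
  "complementable A N \<longleftrightarrow>
     (let B = lsort (squeeze A); m = length B in
       (\<forall>i. Suc i < m \<longrightarrow> fst (B ! i) * snd (B ! i) dvd snd (B ! Suc i)) \<and>
       (m > 0 \<longrightarrow> fst (B ! (m - 1)) * snd (B ! (m - 1)) dvd N))"

text \<open>C = (d_1, d_2/(s_1 d_1), ..., N/(s_m d_m)) : (1, s_1 d_1, ..., s_m d_m).\<close>
definition comp_C :: "flat_layout \<Rightarrow> nat \<Rightarrow> flat_layout" where
  "comp_C A N = (let B = lsort (squeeze A);
                     strides = 1 # map (\<lambda>(s, d). s * d) B;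
                     nums = map snd B @ [N] in
                  zip (map2 (div) nums strides) strides)"

definition comp_flat :: "flat_layout \<Rightarrow> nat \<Rightarrow> flat_layout" where
  "comp_flat A N = coal_flat (comp_C A N)"

definition layout_comp :: "layout \<Rightarrow> nat \<Rightarrow> layout" where
  "layout_comp A N = coal (flat_to_layout (comp_flat (layout_flat A) N))"

text \<open>A pointed map \<open>\<langle>len S\<rangle>\<^sub>* \<rightarrow> \<langle>len T\<rangle>\<^sub>*\<close> is represented by \<open>\<alpha> :: nat \<Rightarrow> nat option\<close>
  on the indices 1..len S, with None standing for the base point *.\<close>
definition is_morphism :: "nat ntree \<Rightarrow> nat ntree \<Rightarrow> (nat \<Rightarrow> nat option) \<Rightarrow> bool" where
  "is_morphism S T \<alpha> \<longleftrightarrow> is_ntuple S \<and> is_ntuple T \<and>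
     (\<forall>i\<in>{1..nt_len S}. \<forall>j. \<alpha> i = Some j \<longrightarrow> j \<in> {1..nt_len T} \<and> nt_entry S i = nt_entry T j) \<and>
     (\<forall>i\<in>{1..nt_len S}. \<forall>i'\<in>{1..nt_len S}. \<forall>j. \<alpha> i = Some j \<and> \<alpha> i' = Some j \<longrightarrow> i = i')"

definition injective_morphism :: "nat ntree \<Rightarrow> nat ntree \<Rightarrow> (nat \<Rightarrow> nat option) \<Rightarrow> bool" where
  "injective_morphism S T \<alpha> \<longleftrightarrow> is_morphism S T \<alpha> \<and> (\<forall>i\<in>{1..nt_len S}. \<alpha> i \<noteq> None) \<and>
     inj_on \<alpha> {1..nt_len S}"

definition L_mor :: "nat ntree \<Rightarrow> nat ntree \<Rightarrow> (nat \<Rightarrow> nat option) \<Rightarrow> layout" where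
  "L_mor S T \<alpha> = (S, THE D. congruent S D \<and>
      nt_flat D = map (\<lambda>i. case \<alpha> i of None \<Rightarrow> 0
                                  | Some j \<Rightarrow> prod_list (take (j - 1) (nt_flat T)))
                      [1..<nt_len S + 1])"

definition compl_idx :: "nat ntree \<Rightarrow> nat ntree \<Rightarrow> (nat \<Rightarrow> nat option) \<Rightarrow> nat list" where
  "compl_idx S T \<alpha> = filter (\<lambda>j. Some j \<notin> \<alpha> ` {1..nt_len S}) [1..<nt_len T + 1]"

definition compl_shape :: "nat ntree \<Rightarrow> nat ntree \<Rightarrow> (nat \<Rightarrow> nat option) \<Rightarrow> nat ntree" where
  "compl_shape S T \<alpha> = Tup (map (\<lambda>j. Leaf (nt_entry T j)) (compl_idx S T \<alpha>))"

definition compl_map :: "nat ntree \<Rightarrow> nat ntree \<Rightarrow> (nat \<Rightarrow> nat option) \<Rightarrow> (nat \<Rightarrow> nat option)" where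
  "compl_map S T \<alpha> = (\<lambda>r. Some (compl_idx S T \<alpha> ! (r - 1)))"

end

theory Submission
  imports Defs "HOL-Library.Multiset"
begin

lemma mm_P1: "merge_modes ((s1, d1) # (s2, s1 * d1) # r) = merge_modes ((s1 * s2, d1) # r)"
  by simp

lemma mm_P2: "xs = [] \<or> snd (hd xs) \<noteq> fst a * snd a \<Longrightarrow> merge_modes (a # xs) = a # merge_modes xs"
  by (cases a; cases xs) auto

lemma mm_hd: "\<exists>s' r'. merge_modes ((s, d) # r) = (s', d) # r'"
  by (induction "(s, d) # r" arbitrary: s r rule: merge_modes.induct) auto

fun nm :: "flat_layout \<Rightarrow> bool" where
  "nm [] = True"
| "nm [x] = True"
| "nm ((s1, d1) # (s2, d2) # r) = (d2 \<noteq> s1 * d1 \<and> nm ((s2, d2) # r))"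

lemma nm_mm: "nm (merge_modes xs)"
proof (induction xs rule: merge_modes.induct)
  case (3 s1 d1 s2 d2 rest)
  show ?case
  proof (cases "d2 = s1 * d1")
    case True then show ?thesis using 3 by simp
  next
    case False
    obtain s' r' where h: "merge_modes ((s2, d2) # rest) = (s', d2) # r'" using mm_hd by blast
    show ?thesis using False 3(2) h by simp
  qed
qed auto

lemma nm_id: "nm xs \<Longrightarrow> merge_modes xs = xs"
  by (induction xs rule: merge_modes.induct) auto

lemma mm_idem: "merge_modes (merge_modes xs) = merge_modes xs"
  using nm_id nm_mm by blast

lemma mm_ge2: "\<forall>(s, d)\<in>set xs. 2 \<le> s \<Longrightarrow> \<forall>(s, d)\<in>set (merge_modes xs). 2 \<le> s"
proof (induction xs rule: merge_modes.induct)
  case (3 s1 d1 s2 d2 rest)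
  have "2 \<le> s1 * s2" using 3(3) by (simp add: mult_le_mono[of 1 s1 2 s2, simplified]) 
  then show ?case using 3 by auto
qed auto

fun sel :: "nat \<Rightarrow> (nat \<Rightarrow> bool) \<Rightarrow> nat list \<Rightarrow> flat_layout" where
  "sel q P [] = []"
| "sel q P (x # t) = (if P 0 \<and> x \<noteq> 1 then [(x, q)] else []) @ sel (q * x) (\<lambda>j. P (Suc j)) t"

lemma sel_closed: "sel q P t = map (\<lambda>j. (t ! j, q * prod_list (take j t))) (filter (\<lambda>j. P j \<and> t ! j \<noteq> 1) [0..<length t])"
proof (induction t arbitrary: q P)
  case Nil then show ?case by simp
next
  case (Cons x t)
  have u: "[0..<length (x # t)] = 0 # map Suc [0..<length t]"
    by (simp add: map_Suc_upt upt_conv_Cons del: upt_Suc)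
  show ?case unfolding u using Cons by (simp add: filter_map o_def mult.assoc)
qed

lemma sel_stride: "\<forall>x\<in>set t. 0 < x \<Longrightarrow> (s, d) \<in> set (sel q P t) \<Longrightarrow> q \<le> d"
proof (induction t arbitrary: q P)
  case (Cons x t)
  have "q \<le> q * x" using Cons.prems by simp
  moreover have "(s, d) \<in> set (sel (q * x) (\<lambda>j. P (Suc j)) t) \<Longrightarrow> q * x \<le> d"
    using Cons.IH Cons.prems by simp
  ultimately have "(s, d) \<in> set (sel (q * x) (\<lambda>j. P (Suc j)) t) \<Longrightarrow> q \<le> d" by linarith
  then show ?case using Cons.prems by (auto split: if_splits)
qed simp

lemma sel_ge2: "\<forall>x\<in>set t. 0 < x \<Longrightarrow> (s, d) \<in> set (sel q P t) \<Longrightarrow> 2 \<le> s"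
proof (induction t arbitrary: q P)
  case (Cons x t)
  then show ?case by (auto split: if_splits)
qed simp

lemma sel_sorted: "\<forall>x\<in>set t. 0 < x \<Longrightarrow> 0 < q \<Longrightarrow> sorted_wrt (<) (map snd (sel q P t))"
proof (induction t arbitrary: q P)
  case (Cons x t)
  have q: "q < q * x" if "x \<noteq> 1" using Cons.prems that by simp
  have st: "\<forall>(s, d)\<in>set (sel (q * x) (\<lambda>j. P (Suc j)) t). q * x \<le> d"
    using sel_stride Cons.prems by fastforce
  have "sorted_wrt (<) (map snd (sel (q * x) (\<lambda>j. P (Suc j)) t))"
    using Cons by simp
  note IH = this
  show ?case
  proof (cases "P 0 \<and> x \<noteq> 1")
    case True
    have "\<forall>y\<in>set (map snd (sel (q * x) (\<lambda>j. P (Suc j)) t)). q < y"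
    proof
      fix y assume "y \<in> set (map snd (sel (q * x) (\<lambda>j. P (Suc j)) t))"
      then obtain s where "(s, y) \<in> set (sel (q * x) (\<lambda>j. P (Suc j)) t)" by auto
      then have "q * x \<le> y" using st by auto
      moreover have "q < q * x" using q True by simp
      ultimately show "q < y" by linarith
    qed
    then show ?thesis using True IH by simp
  next
    case False
    then have "sel q P (x # t) = sel (q * x) (\<lambda>j. P (Suc j)) t" by (simp only: sel.simps if_not_P[OF False] if_False append_Nil)
    then show ?thesis using IH by simp
  qed
qed simp

fun cg :: "nat \<Rightarrow> nat \<Rightarrow> (nat \<Rightarrow> bool) \<Rightarrow> nat list \<Rightarrow> flat_layout" where
  "cg st g M [] = [(g, st)]"
| "cg st g M (x # t) = (if M 0 \<and> x \<noteq> 1 then (g, st) # cg (st * g * x) 1 (\<lambda>j. M (Suc j)) t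
                        else cg st (g * x) (\<lambda>j. M (Suc j)) t)"

lemma hd_ne: "\<forall>(s, d)\<in>set xs. (c::nat) \<le> d \<Longrightarrow> b < c \<Longrightarrow> xs = [] \<or> snd (hd xs) \<noteq> b"
  by (cases xs) auto

lemma le_mult3: "0 < g \<Longrightarrow> 0 < (x::nat) \<Longrightarrow> st \<le> st * g * x"
proof -
  assume "0 < g" "0 < x"
  then have "1 \<le> g * x" by simp
  then have "st * 1 \<le> st * (g * x)" by (rule mult_le_mono2)
  then show ?thesis by (simp add: mult.assoc)
qed

lemma cg_stride: "\<forall>x\<in>set t. 0 < x \<Longrightarrow> 0 < g \<Longrightarrow> (s, d) \<in> set (cg st g M t) \<Longrightarrow> st \<le> d"
proof (induction t arbitrary: st g M)
  case Nil then show ?case by simp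
next
  case (Cons x t)
  have x: "0 < x" and pt: "\<forall>x\<in>set t. 0 < x" using Cons.prems by auto
  have le: "st \<le> st * g * x" using le_mult3[OF Cons.prems(2) x] .
  show ?case
  proof (cases "M 0 \<and> x \<noteq> 1")
    case True
    then have "(s, d) = (g, st) \<or> (s, d) \<in> set (cg (st * g * x) 1 (\<lambda>j. M (Suc j)) t)"
      using Cons.prems(3) by simp
    then show ?thesis
    proof
      assume "(s, d) \<in> set (cg (st * g * x) 1 (\<lambda>j. M (Suc j)) t)"
      then have "st * g * x \<le> d" using Cons.IH[OF pt, of 1] by simp
      then show ?thesis using le by linarith
    qed simp
  next
    case False
    then have "(s, d) \<in> set (cg st (g * x) (\<lambda>j. M (Suc j)) t)" using Cons.prems(3) by (simp only: cg.simps if_not_P[OF False] if_False)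
    moreover have "0 < g * x" using Cons.prems(2) x by simp
    ultimately show ?thesis using Cons.IH[OF pt] by blast
  qed
qed

definition zc :: "nat \<Rightarrow> flat_layout \<Rightarrow> nat \<Rightarrow> flat_layout" where
  "zc st B N = (let strides = st # map (\<lambda>(s, d). s * d) B;
                    nums = map snd B @ [N] in
                  zip (map2 (div) nums strides) strides)"

lemma zc_cons: "0 < st \<Longrightarrow> zc st ((s, st * g) # B) N = (g, st) # zc (s * (st * g)) B N"
  by (simp add: zc_def Let_def)

lemma cg_zc: "\<forall>x\<in>set t. 0 < x \<Longrightarrow> 0 < st \<Longrightarrow> 0 < g \<Longrightarrow>
   cg st g M t = zc st (sel (st * g) M t) (st * g * prod_list t)"
proof (induction t arbitrary: st g M)
  case Nil then show ?case by (simp add: zc_def)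
next
  case (Cons x t)
  have x: "0 < x" and pt: "\<forall>x\<in>set t. 0 < x" using Cons.prems by auto
  show ?case
  proof (cases "M 0 \<and> x \<noteq> 1")
    case True
    have p: "0 < st * g * x" using Cons.prems x by simp
    have IH: "cg (st * g * x) 1 (\<lambda>j. M (Suc j)) t = zc (st * g * x) (sel (st * g * x) (\<lambda>j. M (Suc j)) t) (st * g * x * prod_list t)"
      using Cons.IH[OF pt p, of 1] by simp
    have e1: "x * (st * g) = st * g * x" by (simp add: mult_ac)
    have e2: "st * g * prod_list (x # t) = st * g * x * prod_list t" by (simp add: mult_ac)
    have "cg st g M (x # t) = (g, st) # cg (st * g * x) 1 (\<lambda>j. M (Suc j)) t" using True by simp
    also have "\<dots> = (g, st) # zc (x * (st * g)) (sel (st * g * x) (\<lambda>j. M (Suc j)) t) (st * g * x * prod_list t)"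
      by (simp only: IH e1)
    also have "\<dots> = zc st ((x, st * g) # sel (st * g * x) (\<lambda>j. M (Suc j)) t) (st * g * x * prod_list t)"
      using zc_cons[OF Cons.prems(2)] by simp
    also have "\<dots> = zc st (sel (st * g) M (x # t)) (st * g * prod_list (x # t))"
      by (simp only: e2 sel.simps if_P[OF True] if_True append_Cons append_Nil)
    finally show ?thesis .
  next
    case False
    have p: "0 < g * x" using Cons.prems x by simp
    have IH: "cg st (g * x) (\<lambda>j. M (Suc j)) t = zc st (sel (st * (g * x)) (\<lambda>j. M (Suc j)) t) (st * (g * x) * prod_list t)"
      using Cons.IH[OF pt Cons.prems(2) p] by simp
    have e1: "st * (g * x) = st * g * x" by (simp add: mult_ac)
    have e2: "st * g * prod_list (x # t) = st * g * x * prod_list t" by (simp add: mult_ac)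
    have "cg st g M (x # t) = cg st (g * x) (\<lambda>j. M (Suc j)) t" by (simp only: cg.simps if_not_P[OF False] if_False)
    also have "\<dots> = zc st (sel (st * g * x) (\<lambda>j. M (Suc j)) t) (st * g * x * prod_list t)"
      using IH e1 by simp
    also have "\<dots> = zc st (sel (st * g) M (x # t)) (st * g * prod_list (x # t))"
      by (simp only: e2 sel.simps if_not_P[OF False] if_False append_Nil)
    finally show ?thesis .
  qed
qed

lemma main_merge: "\<forall>x\<in>set t. 0 < x \<Longrightarrow> 0 < st \<Longrightarrow> 0 < g \<Longrightarrow>
  merge_modes ((if g = 1 then [] else [(g, st)]) @ sel (st * g) (\<lambda>j. \<not> M j) t)
  = merge_modes (filter (\<lambda>(s, d). s \<noteq> 1) (cg st g M t))"
proof (induction t arbitrary: st g M)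
  case Nil then show ?case by simp
next
  case (Cons x t)
  have x: "0 < x" using Cons.prems by simp
  have pt: "\<forall>x\<in>set t. 0 < x" using Cons.prems by simp
  show ?case
  proof (cases "x = 1")
    case True
    then show ?thesis using Cons.IH[OF pt Cons.prems(2,3), of "\<lambda>j. M (Suc j)"] by simp
  next
    case x1: False
    show ?thesis
    proof (cases "M 0")
      case False
      have IH: "merge_modes ([(g * x, st)] @ sel (st * (g * x)) (\<lambda>j. \<not> M (Suc j)) t)
         = merge_modes (filter (\<lambda>(s, d). s \<noteq> 1) (cg st (g * x) (\<lambda>j. M (Suc j)) t))"
      proof -
        have "g * x \<noteq> 1" using x1 Cons.prems by simp
        then show ?thesis using Cons.IH[OF pt Cons.prems(2), of "g * x" "\<lambda>j. M (Suc j)"] Cons.prems x x1 by simp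
      qed
      show ?thesis
      proof (cases "g = 1")
        case True then show ?thesis using False x1 IH by simp
      next
        case g1: False
        have "merge_modes ((g, st) # (x, st * g) # sel (st * g * x) (\<lambda>j. \<not> M (Suc j)) t)
           = merge_modes ((g * x, st) # sel (st * (g * x)) (\<lambda>j. \<not> M (Suc j)) t)"
          using mm_P1[of g st x] by (simp add: mult_ac)
        then show ?thesis using False x1 g1 IH by simp
      qed
    next
      case True
      have IH: "merge_modes (sel (st * g * x) (\<lambda>j. \<not> M (Suc j)) t)
         = merge_modes (filter (\<lambda>(s, d). s \<noteq> 1) (cg (st * g * x) 1 (\<lambda>j. M (Suc j)) t))"
        using Cons.IH[OF pt, of "st * g * x" 1 "\<lambda>j. M (Suc j)"] Cons.prems x by simp
      show ?thesis
      proof (cases "g = 1")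
        case g1: True then show ?thesis using True x1 IH by simp
      next
        case g1: False
        have lt: "g * st < st * g * x" using x x1 Cons.prems by simp
        have s1: "\<forall>(s, d)\<in>set (sel (st * g * x) (\<lambda>j. \<not> M (Suc j)) t). st * g * x \<le> d"
          using sel_stride[OF pt] by fastforce
        have s2: "\<forall>(s, d)\<in>set (filter (\<lambda>(s, d). s \<noteq> 1) (cg (st * g * x) 1 (\<lambda>j. M (Suc j)) t)). st * g * x \<le> d"
          using cg_stride[OF pt, of 1 _ _ "st * g * x"] by auto
        have e1: "merge_modes ((g, st) # sel (st * g * x) (\<lambda>j. \<not> M (Suc j)) t)
             = (g, st) # merge_modes (sel (st * g * x) (\<lambda>j. \<not> M (Suc j)) t)"
        proof (rule mm_P2)
          show "sel (st * g * x) (\<lambda>j. \<not> M (Suc j)) t = [] \<or>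
            snd (hd (sel (st * g * x) (\<lambda>j. \<not> M (Suc j)) t)) \<noteq> fst (g, st) * snd (g, st)"
            using hd_ne[OF s1 lt] by simp
        qed
        have e2: "merge_modes ((g, st) # filter (\<lambda>(s, d). s \<noteq> 1) (cg (st * g * x) 1 (\<lambda>j. M (Suc j)) t))
             = (g, st) # merge_modes (filter (\<lambda>(s, d). s \<noteq> 1) (cg (st * g * x) 1 (\<lambda>j. M (Suc j)) t))"
        proof (rule mm_P2)
          show "filter (\<lambda>(s, d). s \<noteq> 1) (cg (st * g * x) 1 (\<lambda>j. M (Suc j)) t) = [] \<or>
            snd (hd (filter (\<lambda>(s, d). s \<noteq> 1) (cg (st * g * x) 1 (\<lambda>j. M (Suc j)) t))) \<noteq> fst (g, st) * snd (g, st)"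
            using hd_ne[OF s2 lt] by simp
        qed
        show ?thesis using True x1 g1 e1 e2 IH by simp
      qed
    qed
  qed
qed


lemma concat_single: "concat (map (\<lambda>x. [f x]) xs) = map f xs"
  by (induction xs) auto

lemma flat_set: "set (nt_flat X) = set_ntree X"
  by (induction X) auto

lemma flat_map: "nt_flat (map_ntree f X) = map f (nt_flat X)"
  by (induction X) (simp_all add: map_concat cong: map_cong)

lemma concat_split: "length xs = length ys \<Longrightarrow> (\<forall>i<length xs. length (f (xs ! i)) = length (g (ys ! i))) \<Longrightarrow>
   concat (map f xs) = concat (map g ys) \<Longrightarrow> i < length xs \<Longrightarrow> f (xs ! i) = g (ys ! i)"
proof (induction xs arbitrary: ys i)
  case Nil then show ?case by simp
next
  case (Cons x xs)
  then obtain y ys' where ys: "ys = y # ys'" by (cases ys) auto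
  have l0: "length (f x) = length (g y)" using Cons.prems(2) ys by force
  have c: "f x @ concat (map f xs) = g y @ concat (map g ys')" using Cons.prems(3) ys by simp
  then have e1: "f x = g y" and e2: "concat (map f xs) = concat (map g ys')"
    using l0 by (auto simp: append_eq_append_conv)
  show ?case
  proof (cases i)
    case 0 then show ?thesis using e1 ys by simp
  next
    case (Suc k)
    have "\<forall>i<length xs. length (f (xs ! i)) = length (g (ys' ! i))"
      using Cons.prems(2) ys by force
    then show ?thesis using Cons.IH[of ys' k] Cons.prems(1,4) e2 ys Suc by simp
  qed
qed

lemma nt_uniq: "map_ntree (\<lambda>_. ()) D1 = map_ntree (\<lambda>_. ()) D2 \<Longrightarrow> nt_flat D1 = nt_flat D2 \<Longrightarrow> D1 = D2"
proof (induction D1 arbitrary: D2)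
  case (Leaf a) then show ?case by (cases D2) auto
next
  case (Tup xs)
  then obtain ys where D2: "D2 = Tup ys" by (cases D2) auto
  have m: "map (map_ntree (\<lambda>_. ())) xs = map (map_ntree (\<lambda>_. ())) ys" using Tup.prems D2 by simp
  hence len: "length xs = length ys" by (metis length_map)
  have sh: "\<forall>i<length xs. map_ntree (\<lambda>_. ()) (xs ! i) = map_ntree (\<lambda>_. ()) (ys ! i)"
  proof (intro allI impI)
    fix i assume i: "i < length xs"
    show "map_ntree (\<lambda>_. ()) (xs ! i) = map_ntree (\<lambda>_. ()) (ys ! i)"
      using arg_cong[OF m, of "\<lambda>l. l ! i"] i len by simp
  qed
  have ll: "\<forall>i<length xs. length (nt_flat (xs ! i)) = length (nt_flat (ys ! i))"
  proof (intro allI impI)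
    fix i assume i: "i < length xs"
    have "nt_flat (map_ntree (\<lambda>_. ()) (xs ! i)) = nt_flat (map_ntree (\<lambda>_. ()) (ys ! i))"
      using sh i by simp
    then have "map (\<lambda>_. ()) (nt_flat (xs ! i)) = map (\<lambda>_. ()) (nt_flat (ys ! i))"
      by (simp only: flat_map)
    then show "length (nt_flat (xs ! i)) = length (nt_flat (ys ! i))"
      by (metis length_map)
  qed
  have c: "concat (map nt_flat xs) = concat (map nt_flat ys)" using Tup.prems D2 by simp
  have "\<forall>i<length xs. xs ! i = ys ! i"
  proof (intro allI impI)
    fix i assume i: "i < length xs"
    have fe: "nt_flat (xs ! i) = nt_flat (ys ! i)" by (rule concat_split[OF len ll c i])
    show "xs ! i = ys ! i" by (rule Tup.IH[OF nth_mem[OF i]]) (use sh i fe in auto)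
  qed
  then show ?case using D2 len by (simp add: list_eq_iff_nth_eq)
qed

lemma nt_ex_list: "(\<And>x (F::'b list). x \<in> set xs \<Longrightarrow> length F = length (nt_flat x) \<Longrightarrow>
     \<exists>D. map_ntree (\<lambda>_. ()) x = map_ntree (\<lambda>_. ()) D \<and> nt_flat D = F) \<Longrightarrow>
   length (F::'b list) = length (concat (map nt_flat (xs :: 'a ntree list))) \<Longrightarrow>
   \<exists>Ds. map (map_ntree (\<lambda>_. ())) xs = map (map_ntree (\<lambda>_. ())) Ds \<and> concat (map nt_flat Ds) = F"
proof (induction xs arbitrary: F)
  case Nil then show ?case by simp
next
  case (Cons x xs)
  have l1: "length (take (length (nt_flat x)) F) = length (nt_flat x)" using Cons.prems(2) by simp
  obtain D where D: "map_ntree (\<lambda>_. ()) x = map_ntree (\<lambda>_. ()) D" "nt_flat D = take (length (nt_flat x)) F"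
    using Cons.prems(1)[OF list.set_intros(1) l1] by blast
  have h: "\<exists>D. map_ntree (\<lambda>_. ()) y = map_ntree (\<lambda>_. ()) D \<and> nt_flat D = F'"
    if "y \<in> set xs" "length F' = length (nt_flat y)" for y and F' :: "'b list"
    using Cons.prems(1)[OF list.set_intros(2)[OF that(1)] that(2)] .
  have l2: "length (drop (length (nt_flat x)) F) = length (concat (map nt_flat xs))" using Cons.prems(2) by simp
  obtain Ds where Ds: "map (map_ntree (\<lambda>_. ())) xs = map (map_ntree (\<lambda>_. ())) Ds"
      "concat (map nt_flat Ds) = drop (length (nt_flat x)) F"
    using Cons.IH[OF h l2] by blast
  show ?case
    by (intro exI[of _ "D # Ds"]) (simp add: D Ds)
qed

lemma nt_ex: "length F = length (nt_flat S) \<Longrightarrow> \<exists>D. map_ntree (\<lambda>_. ()) S = map_ntree (\<lambda>_. ()) D \<and> nt_flat D = F"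
proof (induction S arbitrary: F)
  case (Leaf a)
  then obtain f where "F = [f]" by (cases F) auto
  then show ?case by (intro exI[of _ "Leaf f"]) simp
next
  case (Tup xs)
  have l: "length F = length (concat (map nt_flat xs))" using Tup.prems by simp
  obtain Ds where "map (map_ntree (\<lambda>_. ())) xs = map (map_ntree (\<lambda>_. ())) Ds \<and> concat (map nt_flat Ds) = F"
    using nt_ex_list[OF Tup.IH l] by blast
  then show ?case by (intro exI[of _ "Tup Ds"]) simp
qed

lemma the_flat:
  assumes h: "length F = length (nt_flat S)"
  shows "nt_flat (THE D. congruent S D \<and> nt_flat D = F) = F"
proof -
  obtain D where D1: "map_ntree (\<lambda>_. ()) S = map_ntree (\<lambda>_. ()) D" and D2: "nt_flat D = F"
    using nt_ex[OF h] by blast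
  have P: "congruent S D \<and> nt_flat D = F" using D1 D2 by (simp add: Defs.congruent_def)
  have U: "D' = D" if "congruent S D' \<and> nt_flat D' = F" for D'
  proof (rule nt_uniq)
    show "map_ntree (\<lambda>_. ()) D' = map_ntree (\<lambda>_. ()) D" using that D1 by (simp add: Defs.congruent_def)
    show "nt_flat D' = nt_flat D" using that D2 by simp
  qed
  have "(THE D. congruent S D \<and> nt_flat D = F) = D"
    by (rule the_equality) (rule P, rule U)
  then show ?thesis using D2 by simp
qed

lemma ftl_flat: "layout_flat (flat_to_layout C) = C"
  by (simp add: layout_flat_def flat_to_layout_def o_def concat_single zip_map_fst_snd)

fun ch :: "nat \<Rightarrow> flat_layout \<Rightarrow> nat \<Rightarrow> bool" where
  "ch q [] N = (q dvd N)"
| "ch q ((s, d) # B) N = (q dvd d \<and> ch (s * d) B N)"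

lemma sel_chain: "q dvd q' \<Longrightarrow> ch q (sel q' P t) (q' * prod_list t)"
proof (induction t arbitrary: q q' P)
  case Nil then show ?case by simp
next
  case (Cons x t)
  show ?case
  proof (cases "P 0 \<and> x \<noteq> 1")
    case True
    have "ch (x * q') (sel (q' * x) (\<lambda>j. P (Suc j)) t) (q' * x * prod_list t)"
      using Cons.IH[of "x * q'" "q' * x"] by (simp add: mult.commute)
    then show ?thesis using True Cons.prems by (simp add: mult.assoc)
  next
    case False
    have "q dvd q' * x" using Cons.prems by simp
    then have "ch q (sel (q' * x) (\<lambda>j. P (Suc j)) t) (q' * x * prod_list t)"
      using Cons.IH by blast
    moreover have "sel q' P (x # t) = sel (q' * x) (\<lambda>j. P (Suc j)) t" by (simp only: sel.simps if_not_P[OF False] if_False append_Nil)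
    ultimately show ?thesis by (simp add: mult.assoc)
  qed
qed

lemma ch_hd: "ch q (b # B) N \<Longrightarrow> q dvd snd b"
  by (cases b) auto

lemma ch_idx: "ch q B N \<Longrightarrow> (\<forall>i. Suc i < length B \<longrightarrow> fst (B ! i) * snd (B ! i) dvd snd (B ! Suc i)) \<and>
   (0 < length B \<longrightarrow> fst (B ! (length B - 1)) * snd (B ! (length B - 1)) dvd N)"
proof (induction B arbitrary: q)
  case Nil then show ?case by simp
next
  case (Cons b B)
  obtain s d where b: "b = (s, d)" by (cases b)
  have c: "ch (s * d) B N" using Cons.prems b by simp
  note IH = Cons.IH[OF c]
  show ?case
  proof (intro conjI allI impI)
    fix i assume i: "Suc i < length (b # B)"
    show "fst ((b # B) ! i) * snd ((b # B) ! i) dvd snd ((b # B) ! Suc i)"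
    proof (cases i)
      case 0
      then obtain b' B' where B: "B = b' # B'" using i by (cases B) auto
      have "s * d dvd snd b'" using ch_hd c B by blast
      then show ?thesis using 0 b B by simp
    next
      case (Suc k)
      have "Suc k < length B" using i Suc by simp
      then have "fst (B ! k) * snd (B ! k) dvd snd (B ! Suc k)" using IH by blast
      then show ?thesis using Suc by simp
    qed
  next
    show "fst ((b # B) ! (length (b # B) - 1)) * snd ((b # B) ! (length (b # B) - 1)) dvd N"
    proof (cases B)
      case Nil then show ?thesis using c b by simp
    next
      case (Cons b' B')
      have "fst (B ! (length B - 1)) * snd (B ! (length B - 1)) dvd N" using IH Cons by simp
      moreover have "(b # B) ! (length (b # B) - 1) = B ! (length B - 1)" using Cons by simp
      ultimately show ?thesis by simp
    qed
  qed
qed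

lemma sortlem: "mset Z = mset Y \<Longrightarrow> sorted_wrt (<) (map snd Y) \<Longrightarrow> sort_key snd Z = (Y :: flat_layout)"
proof -
  assume mZ: "mset Z = mset Y" and sY: "sorted_wrt (<) (map snd Y)"
  define W where "W = sort_key snd Z"
  have mW: "mset W = mset Y" using mZ by (simp add: W_def)
  have sW: "sorted (map snd W)" by (simp add: W_def)
  have sY': "sorted (map snd Y)" using sY by (simp add: strict_sorted_iff)
  have mm: "mset (map snd W) = mset (map snd Y)" by (simp only: mset_map mW)
  have "sort (map snd W) = map snd Y" by (rule properties_for_sort) (use mm sY' in auto)
  moreover have "sort (map snd W) = map snd W" using sW by (simp add: sorted_sort_id)
  ultimately have ms: "map snd W = map snd Y" by simp
  have len: "length W = length Y" using mW by (rule mset_eq_length)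
  have "W ! i = Y ! i" if i: "i < length W" for i
  proof -
    have "W ! i \<in> set Y" using i mset_eq_setD[OF mW] by (metis nth_mem)
    then obtain k where k: "k < length Y" "Y ! k = W ! i" by (metis in_set_conv_nth)
    have e: "snd (Y ! k) = snd (Y ! i)" using ms k i len by (metis nth_map)
    have "k = i"
    proof (rule ccontr)
      assume "k \<noteq> i"
      then have "k < i \<or> i < k" by arith
      moreover have sl: "\<And>a b. a < b \<Longrightarrow> b < length Y \<Longrightarrow> snd (Y ! a) < snd (Y ! b)"
        using sY by (simp add: sorted_wrt_iff_nth_less)
      ultimately show False using e k i len by (metis less_irrefl)
    qed
    then show ?thesis using k by simp
  qed
  then show ?thesis using len by (simp add: W_def[symmetric] list_eq_iff_nth_eq)
qed


theorem mainTheorem4: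
  fixes S T :: "nat ntree" and \<alpha> :: "nat \<Rightarrow> nat option"
  assumes "injective_morphism S T \<alpha>"
  shows "complementable (layout_flat (L_mor S T \<alpha>)) (nt_size T) \<and>
         coal (L_mor (compl_shape S T \<alpha>) T (compl_map S T \<alpha>))
           = layout_comp (L_mor S T \<alpha>) (nt_size T)"
proof -
  define t where "t = nt_flat T"
  define n where "n = length t"
  define m where "m = nt_len S"
  have mS: "m = length (nt_flat S)" by (simp add: m_def nt_len_def)
  have A1: "is_morphism S T \<alpha>" and A2: "\<forall>i\<in>{1..nt_len S}. \<alpha> i \<noteq> None"
    and A3: "inj_on \<alpha> {1..nt_len S}"
    using assms unfolding injective_morphism_def by blast+
  have B1: "is_ntuple T"
    and B2: "\<forall>i\<in>{1..nt_len S}. \<forall>j. \<alpha> i = Some j \<longrightarrow> j \<in> {1..nt_len T} \<and> nt_entry S i = nt_entry T j"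
    using A1 unfolding is_morphism_def by blast+
  have pos: "\<forall>x\<in>set t. 0 < x" using B1 unfolding is_ntuple_def t_def flat_set .
  have ent: "\<forall>i\<in>{1..m}. \<forall>j. \<alpha> i = Some j \<longrightarrow> j \<in> {1..n} \<and> nt_flat S ! (i - 1) = t ! (j - 1)"
    using B2 unfolding nt_entry_def m_def n_def t_def nt_len_def .
  have some: "\<forall>i\<in>{1..m}. \<alpha> i \<noteq> None" using A2 unfolding m_def .
  have inj: "inj_on \<alpha> {1..m}" using A3 unfolding m_def .
  define \<beta> where "\<beta> i = the (\<alpha> (Suc i)) - 1" for i
  have ab: "\<alpha> (Suc i) = Some (Suc (\<beta> i)) \<and> \<beta> i < n \<and> nt_flat S ! i = t ! \<beta> i" if i: "i < m" for i
  proof -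
    have si: "Suc i \<in> {1..m}" using i by simp
    obtain j where j: "\<alpha> (Suc i) = Some j" using some si by blast
    then have "j \<in> {1..n} \<and> nt_flat S ! i = t ! (j - 1)" using ent si by fastforce
    then show ?thesis using j by (simp add: \<beta>_def; linarith)
  qed
  have binj: "inj_on \<beta> {..<m}"
  proof (rule inj_onI)
    fix i i' assume "i \<in> {..<m}" "i' \<in> {..<m}" "\<beta> i = \<beta> i'"
    then have "\<alpha> (Suc i) = \<alpha> (Suc i')" "Suc i \<in> {1..m}" "Suc i' \<in> {1..m}" using ab by auto
    then show "i = i'" using inj by (meson Suc_inject inj_onD)
  qed
  define M where "M j = (j \<in> \<beta> ` {..<m})" for j
  define u where "u j = (t ! j, prod_list (take j t))" for j
  define A where "A = layout_flat (L_mor S T \<alpha>)"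
  have LA: "A = map (u \<circ> \<beta>) [0..<m]"
  proof -
    have fl: "nt_flat (snd (L_mor S T \<alpha>)) = map (\<lambda>i. case \<alpha> i of None \<Rightarrow> 0
                                  | Some j \<Rightarrow> prod_list (take (j - 1) (nt_flat T))) [1..<nt_len S + 1]"
      unfolding L_mor_def snd_conv by (rule the_flat) (simp add: nt_len_def del: upt_Suc)
    have up: "[1..<nt_len S + 1] = map Suc [0..<m]" unfolding map_Suc_upt m_def by simp
    have fs: "fst (L_mor S T \<alpha>) = S" by (simp add: L_mor_def)
    show ?thesis
      unfolding A_def layout_flat_def fl up fs
      by (rule nth_equalityI) (auto simp: mS[symmetric] t_def[symmetric] u_def ab)
  qed
  have SQ: "squeeze A = map u (filter (\<lambda>j. t ! j \<noteq> 1) (map \<beta> [0..<m]))"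
    by (simp add: LA squeeze_def filter_map o_def u_def)
  have SEL: "sel q P t = map (\<lambda>j. (t ! j, q * prod_list (take j t))) (filter (\<lambda>j. P j \<and> t ! j \<noteq> 1) [0..<n])" for q P
    by (simp add: sel_closed n_def)
  have SRT: "lsort (squeeze A) = sel 1 M t"
  proof -
    define L1 where "L1 = filter (\<lambda>j. t ! j \<noteq> 1) (map \<beta> [0..<m])"
    define L2 where "L2 = filter (\<lambda>j. M j \<and> t ! j \<noteq> 1) [0..<n]"
    have d1: "distinct L1" unfolding L1_def using binj by (simp add: distinct_map lessThan_atLeast0)
    have d2: "distinct L2" unfolding L2_def by simp
    have s12: "set L1 = set L2" unfolding L1_def L2_def M_def using ab by auto
    have "mset L1 = mset L2" using d1 d2 s12 by (simp add: set_eq_iff_mset_eq_distinct)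
    then have "mset (map u L1) = mset (map u L2)" by simp
    moreover have "sel 1 M t = map u L2" by (simp add: SEL L2_def u_def)
    ultimately have "mset (sort_key fst (squeeze A)) = mset (sel 1 M t)" by (simp add: SQ L1_def)
    then show ?thesis unfolding lsort_def using sortlem sel_sorted[OF pos, of 1 M] by simp
  qed
  have N: "nt_size T = prod_list t" by (simp add: nt_size_def t_def)
  have COMP: "comp_C A (nt_size T) = cg 1 1 M t"
    using cg_zc[OF pos, of 1 1 M] by (simp add: comp_C_def zc_def SRT N Let_def)
  have cpl: "complementable A (nt_size T)"
  proof -
    have "ch 1 (sel 1 M t) (1 * prod_list t)" by (rule sel_chain) simp
    from ch_idx[OF this] show ?thesis unfolding complementable_def Let_def SRT N by simp
  qed
  define js where "js = compl_idx S T \<alpha>"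
  have js: "js = filter (\<lambda>j. Some j \<notin> \<alpha> ` {1..m}) [1..<n + 1]"
    by (simp add: js_def compl_idx_def m_def n_def t_def nt_len_def)
  have jsM: "map (\<lambda>j. j - 1) js = filter (\<lambda>j. \<not> M j) [0..<n]"
  proof -
    have "[1..<n + 1] = map Suc [0..<n]" by (simp add: map_Suc_upt)
    then have "js = map Suc (filter (\<lambda>j. Some (Suc j) \<notin> \<alpha> ` {1..m}) [0..<n])"
      by (simp add: js filter_map o_def)
    moreover have "filter (\<lambda>j. Some (Suc j) \<notin> \<alpha> ` {1..m}) [0..<n] = filter (\<lambda>j. \<not> M j) [0..<n]"
    proof (rule filter_cong[OF refl])
      fix j assume "j \<in> set [0..<n]"
      show "(Some (Suc j) \<notin> \<alpha> ` {1..m}) = (\<not> M j)"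
      proof
        assume h: "Some (Suc j) \<notin> \<alpha> ` {1..m}"
        show "\<not> M j"
        proof
          assume "M j"
          then obtain i where "i < m" "\<beta> i = j" by (auto simp: M_def)
          then have "\<alpha> (Suc i) = Some (Suc j)" "Suc i \<in> {1..m}" using ab by auto
          then show False using h by (metis image_eqI)
        qed
      next
        assume h: "\<not> M j"
        show "Some (Suc j) \<notin> \<alpha> ` {1..m}"
        proof
          assume "Some (Suc j) \<in> \<alpha> ` {1..m}"
          then obtain i' where i': "i' \<in> {1..m}" "\<alpha> i' = Some (Suc j)" by auto
          then obtain i where i: "i' = Suc i" "i < m" by (cases i') auto
          then have "\<beta> i = j" using ab i' by simp
          then show False using h i by (auto simp: M_def)
        qed
      qed
    qed
    ultimately show ?thesis by (simp add: o_def)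
  qed
  have CL: "layout_flat (L_mor (compl_shape S T \<alpha>) T (compl_map S T \<alpha>)) = map u (filter (\<lambda>j. \<not> M j) [0..<n])"
  proof -
    have sh: "nt_flat (compl_shape S T \<alpha>) = map (\<lambda>j. t ! (j - 1)) js"
      by (simp add: compl_shape_def js_def o_def concat_single nt_entry_def t_def)
    have ln: "nt_len (compl_shape S T \<alpha>) = length js" by (simp add: nt_len_def sh)
    have fl: "nt_flat (snd (L_mor (compl_shape S T \<alpha>) T (compl_map S T \<alpha>))) =
       map (\<lambda>i. case compl_map S T \<alpha> i of None \<Rightarrow> 0
                                  | Some j \<Rightarrow> prod_list (take (j - 1) (nt_flat T))) [1..<nt_len (compl_shape S T \<alpha>) + 1]"
      unfolding L_mor_def snd_conv by (rule the_flat) (simp add: nt_len_def del: upt_Suc)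
    have up: "[1..<nt_len (compl_shape S T \<alpha>) + 1] = map Suc [0..<length js]" unfolding map_Suc_upt ln by simp
    have fs: "fst (L_mor (compl_shape S T \<alpha>) T (compl_map S T \<alpha>)) = compl_shape S T \<alpha>" by (simp add: L_mor_def)
    have "layout_flat (L_mor (compl_shape S T \<alpha>) T (compl_map S T \<alpha>)) = map (\<lambda>j. u (j - 1)) js"
      unfolding layout_flat_def fl up fs
      by (rule nth_equalityI) (auto simp: sh compl_map_def js_def[symmetric] t_def[symmetric] u_def)
    also have "\<dots> = map u (map (\<lambda>j. j - 1) js)" by simp
    also have "\<dots> = map u (filter (\<lambda>j. \<not> M j) [0..<n])" by (simp only: jsM)
    finally show ?thesis .
  qed
  have SQC: "squeeze (map u (filter (\<lambda>j. \<not> M j) [0..<n])) = sel 1 (\<lambda>j. \<not> M j) t"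
    by (simp add: SEL squeeze_def filter_map o_def u_def)
  define R where "R = merge_modes (sel 1 (\<lambda>j. \<not> M j) t)"
  have c1: "coal_flat (layout_flat (L_mor (compl_shape S T \<alpha>) T (compl_map S T \<alpha>))) = R"
    by (simp add: CL coal_flat_def SQC R_def)
  have c2: "comp_flat A (nt_size T) = R"
  proof -
    have "squeeze (cg 1 1 M t) = filter (\<lambda>(s, d). s \<noteq> 1) (cg 1 1 M t)" by (simp add: squeeze_def)
    then show ?thesis using main_merge[OF pos, of 1 1 M]
      by (simp add: comp_flat_def coal_flat_def COMP R_def)
  qed
  have ge2: "\<forall>(s, d)\<in>set R. 2 \<le> s"
    unfolding R_def by (rule mm_ge2) (use sel_ge2[OF pos] in fastforce)
  have sqR: "squeeze R = R" unfolding squeeze_def by (rule filter_True) (use ge2 in fastforce)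
  have c3: "coal_flat (layout_flat (flat_to_layout R)) = R"
    unfolding ftl_flat coal_flat_def sqR by (simp only: R_def mm_idem)
  have "coal (L_mor (compl_shape S T \<alpha>) T (compl_map S T \<alpha>)) = layout_comp (L_mor S T \<alpha>) (nt_size T)"
    unfolding layout_comp_def A_def[symmetric] c2 coal_def c1 c3 by (rule refl)
  then show ?thesis using cpl A_def by simp
qed

end
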